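(* Let $(\mathbb{K},|\cdot|)$ be an algebraically closed normed field, $f\in\mathbb{K}[z]$ a polynomial of degree $n\ge2$, $\xi\in\mathbb{K}^n$ a root-vector of $f$, $N\ge1$ and $1\le p\le\infty$. Suppose $x^{(0)}\in\mathbb{K}^n$ has pairwise distinct components and $\Psi(E(x^{(0)}))\le2$. Then $f$ has only simple zeros, and the $N$th Weierstrass-type iteration $x^{(k+1)}=T^{(N)}(x^{(k)})$ is well-defined and converges to $\xi$ with error estimates \[ \|x^{(k+1)}-\xi\|\preceq\lambda^{N(N+1)^k}\|x^{(k)}-\xi\|,\qquad \|x^{(k)}-\xi\|\preceq\lambda^{(N+1)^k-1}\|x^{(0)}-\xi\| \] for all $k\ge0$, where $\lambda=\phi(E(x^{(0)}))$. Moreover, if $\Psi(E(x^{(0)}))<2$, the iteration converges to $\xi$ with order of convergence $N+1$.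
   Context: $a_0$ is the leading coefficient of $f$. For $1\le p\le\infty$, $\|x\|_p=(\sum_i|x_i|^p)^{1/p}$ (max-norm if $p=\infty$). For $x\in\mathbb{K}^n$, $\|x\|=(|x_1|,\dots,|x_n|)\in\mathbb{R}^n$ and $\preceq$ is the coordinatewise order on $\mathbb{R}^n$. $d(x)=(d_1(x),\dots,d_n(x))$, $d_i(x)=\min_{j\ne i}|x_i-x_j|$; for $x\in\mathbb{K}^n$, $y\in\mathbb{R}^n$ with nonzero components, $x/y=(|x_1|/y_1,\dots,|x_n|/y_n)$. A root-vector of $f$ is $\xi\in\mathbb{K}^n$ with $f(z)=a_0\prod_i(z-\xi_i)$ for all $z$. $E(x)=\|(x-\xi)/d(x)\|_p$. Weierstrass-type maps: $T^{(0)}(x)=x$ on $D_0=\mathbb{K}^n$; $D_{N+1}=\{x\in D_N: x_i\ne T^{(N)}_j(x)\ \forall i\ne j\}$, and for $x\in D_{N+1}$, $T^{(N+1)}_i(x)=x_i-\dfrac{f(x_i)}{a_0\prod_{j\ne i}(x_i-T^{(N)}_j(x))}$. The iteration is well-defined if $x^{(k)}\in D_N$ for all $k$. $\omega(t)=\left(1+\frac{t}{(n-1)^{1/p}}\right)^{n-1}$ (with $(n-1)^{1/p}=1$ if $p=\infty$), $\Psi(t)=(1+2t)\omega(t)$ for $t\ge0$, $R$ the unique positive solution of $\Psi(t)=2$, and $\phi(t)=\dfrac{\omega(t)-1}{1-2t\omega(t)}$ for $t\in[0,R]$. *)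

theory Defs
  imports "HOL-Computational_Algebra.Polynomial" "HOL-Library.Extended_Real"
begin

definition abs_value :: "('a::field \<Rightarrow> real) \<Rightarrow> bool" where
  "abs_value nv \<longleftrightarrow>
     (\<forall>x. nv x \<ge> 0) \<and> (\<forall>x. nv x = 0 \<longleftrightarrow> x = 0) \<and>
     (\<forall>x y. nv (x * y) = nv x * nv y) \<and> (\<forall>x y. nv (x + y) \<le> nv x + nv y)"

text \<open>Vectors in K^n are functions nat => 'a; only components 0..n-1 matter.\<close>

definition root_vector :: "'a::field poly \<Rightarrow> nat \<Rightarrow> (nat \<Rightarrow> 'a) \<Rightarrow> bool" where
  "root_vector f n \<xi> \<longleftrightarrow> (\<forall>z. poly f z = lead_coeff f * (\<Prod>i<n. (z - \<xi> i)))"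

fun WT :: "'a::field poly \<Rightarrow> nat \<Rightarrow> nat \<Rightarrow> (nat \<Rightarrow> 'a) \<Rightarrow> (nat \<Rightarrow> 'a)" where
  "WT f n 0 x = x"
| "WT f n (Suc N) x =
     (\<lambda>i. x i - poly f (x i) / (lead_coeff f * (\<Prod>j\<in>{..<n} - {i}. (x i - WT f n N x j))))"

fun WD :: "'a::field poly \<Rightarrow> nat \<Rightarrow> nat \<Rightarrow> (nat \<Rightarrow> 'a) set" where
  "WD f n 0 = UNIV"
| "WD f n (Suc N) = {x \<in> WD f n N. \<forall>i<n. \<forall>j<n. i \<noteq> j \<longrightarrow> x i \<noteq> WT f n N x j}"

definition pnorm :: "nat \<Rightarrow> ereal \<Rightarrow> (nat \<Rightarrow> real) \<Rightarrow> real" where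
  "pnorm n p v = (if p = \<infinity> then Max ((\<lambda>i. \<bar>v i\<bar>) ` {..<n})
                  else (\<Sum>i<n. \<bar>v i\<bar> powr real_of_ereal p) powr (1 / real_of_ereal p))"

definition dvec :: "('a \<Rightarrow> real) \<Rightarrow> nat \<Rightarrow> (nat \<Rightarrow> 'a::field) \<Rightarrow> nat \<Rightarrow> real" where
  "dvec nv n x i = Min ((\<lambda>j. nv (x i - x j)) ` ({..<n} - {i}))"

definition Efun :: "('a \<Rightarrow> real) \<Rightarrow> nat \<Rightarrow> ereal \<Rightarrow> (nat \<Rightarrow> 'a::field) \<Rightarrow> (nat \<Rightarrow> 'a) \<Rightarrow> real" where
  "Efun nv n p \<xi> x = pnorm n p (\<lambda>i. nv (x i - \<xi> i) / dvec nv n x i)"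

definition root_p :: "nat \<Rightarrow> ereal \<Rightarrow> real" where
  "root_p n p = (if p = \<infinity> then 1 else (real n - 1) powr (1 / real_of_ereal p))"

definition omega :: "nat \<Rightarrow> ereal \<Rightarrow> real \<Rightarrow> real" where
  "omega n p t = (1 + t / root_p n p) ^ (n - 1)"

definition Psi :: "nat \<Rightarrow> ereal \<Rightarrow> real \<Rightarrow> real" where
  "Psi n p t = (1 + 2 * t) * omega n p t"

definition phi :: "nat \<Rightarrow> ereal \<Rightarrow> real \<Rightarrow> real" where
  "phi n p t = (omega n p t - 1) / (1 - 2 * t * omega n p t)"

end

theory Submission
  imports Defs "HOL-Analysis.Analysis"
begin

lemma nv_ge0: "abs_value nv \<Longrightarrow> nv x \<ge> 0" by (simp add: abs_value_def)
lemma nv_eq0: "abs_value nv \<Longrightarrow> nv x = 0 \<longleftrightarrow> x = 0" by (simp add: abs_value_def)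
lemma nv_mult: "abs_value nv \<Longrightarrow> nv (x * y) = nv x * nv y" by (simp add: abs_value_def)
lemma nv_add: "abs_value nv \<Longrightarrow> nv (x + y) \<le> nv x + nv y" by (simp add: abs_value_def)

lemma nv_one: assumes "abs_value nv" shows "nv 1 = 1"
proof -
  have "nv 1 = nv 1 * nv 1" using nv_mult[OF assms, of 1 1] by simp
  moreover have "nv 1 \<noteq> 0" using nv_eq0[OF assms] by simp
  ultimately show ?thesis by (metis mult.right_neutral mult_left_cancel)
qed

lemma nv_minus_one: assumes "abs_value nv" shows "nv (-1) = 1"
proof -
  have "nv (-1) * nv (-1) = 1" using nv_mult[OF assms, of "-1" "-1"] nv_one[OF assms] by simp
  moreover have "nv (-1) \<ge> 0" using nv_ge0[OF assms] .
  ultimately show ?thesis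
    by (metis abs_of_nonneg real_sqrt_abs2 real_sqrt_one power2_eq_square)
qed

lemma nv_uminus: assumes "abs_value nv" shows "nv (- x) = nv x"
  using nv_mult[OF assms, of "-1" x] nv_minus_one[OF assms] by simp

lemma nv_commute: assumes "abs_value nv" shows "nv (x - y) = nv (y - x)"
  using nv_uminus[OF assms, of "x - y"] by simp

lemma nv_tri: assumes "abs_value nv" shows "nv (x - z) \<le> nv (x - y) + nv (y - z)"
  using nv_add[OF assms, of "x - y" "y - z"] by simp

lemma nv_diff_ge: assumes "abs_value nv" shows "nv (x - z) \<ge> nv (x - y) - nv (z - y)"
  using nv_tri[OF assms, of x y z] nv_tri[OF assms, of x z y] nv_commute[OF assms, of z y] by linarith

lemma nv_sub_le: assumes "abs_value nv" shows "nv (x - y) \<le> nv x + nv y"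
  using nv_add[OF assms, of x "-y"] nv_uminus[OF assms, of y] by simp

lemma nv_inverse: assumes "abs_value nv" shows "nv (inverse x) = inverse (nv x)"
proof (cases "x = 0")
  case True then show ?thesis using nv_eq0[OF assms, of 0] by simp
next
  case False
  have "nv x * nv (inverse x) = 1" using nv_mult[OF assms, of x "inverse x"] False nv_one[OF assms] by simp
  moreover have "nv x \<noteq> 0" using False nv_eq0[OF assms] by simp
  ultimately show ?thesis by (simp add: field_simps)
qed

lemma nv_divide: assumes "abs_value nv" shows "nv (x / y) = nv x / nv y"
  by (simp add: divide_inverse nv_mult[OF assms] nv_inverse[OF assms])

lemma nv_prod: assumes "abs_value nv" shows "nv (\<Prod>i\<in>S. g i) = (\<Prod>i\<in>S. nv (g i))"
proof (induction S rule: infinite_finite_induct)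
  case (infinite A) then show ?case using nv_one[OF assms] by simp
next
  case empty then show ?case using nv_one[OF assms] by simp
next
  case (insert x F) then show ?case by (simp add: nv_mult[OF assms])
qed

lemma prod_one_plus_dev:
  assumes "abs_value nv" "finite S"
  shows "nv ((\<Prod>j\<in>S. 1 + u j) - 1) \<le> (\<Prod>j\<in>S. 1 + nv (u j)) - 1"
  using assms(2)
proof (induction S rule: finite_induct)
  case empty then show ?case using nv_eq0[OF assms(1), of 0] by simp
next
  case (insert a F)
  let ?P = "\<Prod>j\<in>F. 1 + u j" and ?Q = "\<Prod>j\<in>F. 1 + nv (u j)"
  have nP: "nv ?P \<le> ?Q"
    using nv_add[OF assms(1), of 1 "?P - 1"] nv_one[OF assms(1)] insert.IH by simp
  have eq: "(\<Prod>j\<in>insert a F. 1 + u j) - 1 = (?P - 1) + u a * ?P"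
    using insert by (simp add: algebra_simps)
  have "nv ((\<Prod>j\<in>insert a F. 1 + u j) - 1) = nv ((?P - 1) + u a * ?P)"
    by (simp only: eq)
  also have "\<dots> \<le> nv (?P - 1) + nv (u a) * nv ?P"
    using nv_add[OF assms(1), of "?P - 1" "u a * ?P"] nv_mult[OF assms(1), of "u a" ?P] by simp
  also have "\<dots> \<le> (?Q - 1) + nv (u a) * ?Q"
    using insert.IH nP nv_ge0[OF assms(1)] by (simp add: add_mono mult_left_mono)
  also have "\<dots> = (\<Prod>j\<in>insert a F. 1 + nv (u j)) - 1"
    using insert by (simp add: algebra_simps)
  finally show ?case .
qed

lemma prod_scale_le:
  fixes t :: "'b \<Rightarrow> real"
  assumes "finite S" "0 \<le> c" "c \<le> 1" "\<And>j. j \<in> S \<Longrightarrow> 0 \<le> t j"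
  shows "(\<Prod>j\<in>S. 1 + c * t j) - 1 \<le> c * ((\<Prod>j\<in>S. 1 + t j) - 1)"
  using assms(1,4)
proof (induction S rule: finite_induct)
  case empty then show ?case by simp
next
  case (insert a F)
  let ?A = "\<Prod>j\<in>F. 1 + c * t j" and ?B = "\<Prod>j\<in>F. 1 + t j"
  have IH: "?A - 1 \<le> c * (?B - 1)" using insert by simp
  have B1: "?B \<ge> 1" using insert.prems by (intro prod_ge_1) auto
  have "c * (?B - 1) \<le> 1 * (?B - 1)" using B1 assms(3) by (intro mult_right_mono) auto
  then have AB: "?A \<le> ?B" using IH by simp
  have ta: "t a \<ge> 0" using insert.prems by simp
  have "(\<Prod>j\<in>insert a F. 1 + c * t j) - 1 = (?A - 1) + ?A * (c * t a)"
    using insert by (simp add: algebra_simps)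
  also have "\<dots> \<le> c * (?B - 1) + ?B * (c * t a)"
    using IH AB ta assms(2) by (intro add_mono mult_right_mono) auto
  also have "\<dots> = c * ((\<Prod>j\<in>insert a F. 1 + t j) - 1)"
    using insert by (simp add: algebra_simps)
  finally show ?case .
qed

lemma power_scale_le:
  fixes a :: real
  assumes "0 \<le> c" "c \<le> 1" "0 \<le> a"
  shows "(1 + c * a) ^ m - 1 \<le> c * ((1 + a) ^ m - 1)"
  using prod_scale_le[of "{..<m}" c "\<lambda>_. a"] assms by simp


lemma real_p_ge1: assumes "1 \<le> p" "p \<noteq> \<infinity>" shows "1 \<le> real_of_ereal p"
  using assms by (cases p) auto

lemma pnorm_inf: "p = \<infinity> \<Longrightarrow> pnorm n p v = Max ((\<lambda>i. \<bar>v i\<bar>) ` {..<n})"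
  by (simp add: pnorm_def)
lemma pnorm_fin: "p \<noteq> \<infinity> \<Longrightarrow> pnorm n p v = (\<Sum>i<n. \<bar>v i\<bar> powr real_of_ereal p) powr (1 / real_of_ereal p)"
  by (simp add: pnorm_def)

lemma pnorm_ge_comp:
  assumes "1 \<le> p" "i < n"
  shows "\<bar>v i\<bar> \<le> pnorm n p v"
proof (cases "p = \<infinity>")
  case True
  then show ?thesis using assms by (simp add: pnorm_inf)
next
  case False
  define q where "q = real_of_ereal p"
  have q1: "1 \<le> q" using real_p_ge1[OF assms(1) False] q_def by simp
  have "\<bar>v i\<bar> = (\<bar>v i\<bar> powr q) powr (1 / q)" using q1 by (simp add: powr_powr)
  also have "\<dots> \<le> (\<Sum>j<n. \<bar>v j\<bar> powr q) powr (1 / q)"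
    using assms q1 by (intro powr_mono2 member_le_sum) auto
  finally show ?thesis using False by (simp add: pnorm_fin q_def)
qed

lemma pnorm_nonneg: assumes "1 \<le> p" "0 < n" shows "0 \<le> pnorm n p v"
  using pnorm_ge_comp[OF assms(1,2), of v] by linarith

lemma pnorm_mono:
  assumes "1 \<le> p" "\<And>i. i < n \<Longrightarrow> \<bar>u i\<bar> \<le> \<bar>v i\<bar>"
  shows "pnorm n p u \<le> pnorm n p v"
proof (cases "p = \<infinity>")
  case True
  show ?thesis
  proof (cases "n = 0")
    case True then show ?thesis by (simp add: pnorm_def)
  next
    case False
    have "Max ((\<lambda>i. \<bar>u i\<bar>) ` {..<n}) \<le> Max ((\<lambda>i. \<bar>v i\<bar>) ` {..<n})"
    proof (rule Max.boundedI)
      show "finite ((\<lambda>i. \<bar>u i\<bar>) ` {..<n})" by simp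
      show "(\<lambda>i. \<bar>u i\<bar>) ` {..<n} \<noteq> {}" using False by auto
    next
      fix a assume "a \<in> (\<lambda>i. \<bar>u i\<bar>) ` {..<n}"
      then obtain i where "i < n" "a = \<bar>u i\<bar>" by auto
      then have "\<bar>v i\<bar> \<le> Max ((\<lambda>i. \<bar>v i\<bar>) ` {..<n})" by (intro Max_ge) auto
      then show "a \<le> Max ((\<lambda>i. \<bar>v i\<bar>) ` {..<n})" using assms(2)[OF \<open>i < n\<close>] \<open>a = _\<close> by linarith
    qed
    then show ?thesis using True by (simp add: pnorm_inf)
  qed
next
  case False
  define q where "q = real_of_ereal p"
  have q1: "1 \<le> q" using real_p_ge1[OF assms(1) False] q_def by simp
  have "(\<Sum>j<n. \<bar>u j\<bar> powr q) \<le> (\<Sum>j<n. \<bar>v j\<bar> powr q)"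
    using assms(2) q1 by (intro sum_mono powr_mono2) auto
  then have "(\<Sum>j<n. \<bar>u j\<bar> powr q) powr (1/q) \<le> (\<Sum>j<n. \<bar>v j\<bar> powr q) powr (1/q)"
    using q1 by (intro powr_mono2) (auto intro: sum_nonneg)
  then show ?thesis using False by (simp add: pnorm_fin q_def)
qed

lemma pnorm_scale:
  assumes "1 \<le> p" "0 < n" "0 \<le> c"
  shows "pnorm n p (\<lambda>i. c * v i) = c * pnorm n p v"
proof (cases "p = \<infinity>")
  case True
  have "mono ((*) c)" using assms(3) by (simp add: mono_def mult_left_mono)
  then have "c * Max ((\<lambda>i. \<bar>v i\<bar>) ` {..<n}) = Max ((*) c ` (\<lambda>i. \<bar>v i\<bar>) ` {..<n})"
    using assms(2) by (intro mono_Max_commute) auto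
  also have "(*) c ` (\<lambda>i. \<bar>v i\<bar>) ` {..<n} = (\<lambda>i. \<bar>c * v i\<bar>) ` {..<n}"
    using assms(3) by (auto simp: abs_mult)
  finally show ?thesis using True by (simp add: pnorm_inf)
next
  case False
  define q where "q = real_of_ereal p"
  have q1: "1 \<le> q" using real_p_ge1[OF assms(1) False] q_def by simp
  have "(\<Sum>j<n. \<bar>c * v j\<bar> powr q) = c powr q * (\<Sum>j<n. \<bar>v j\<bar> powr q)"
    using assms(3) by (simp add: abs_mult powr_mult sum_distrib_left)
  then have "(\<Sum>j<n. \<bar>c * v j\<bar> powr q) powr (1/q) = (c powr q) powr (1/q) * (\<Sum>j<n. \<bar>v j\<bar> powr q) powr (1/q)"
    by (simp add: powr_mult sum_nonneg)
  also have "(c powr q) powr (1/q) = c" using q1 assms(3) by (simp add: powr_powr)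
  finally show ?thesis using False by (simp add: pnorm_fin q_def)
qed

lemma pnorm_le_scale:
  assumes "1 \<le> p" "0 < n" "0 \<le> c" "\<And>i. i < n \<Longrightarrow> \<bar>u i\<bar> \<le> c * \<bar>v i\<bar>"
  shows "pnorm n p u \<le> c * pnorm n p v"
proof -
  have "pnorm n p u \<le> pnorm n p (\<lambda>i. c * \<bar>v i\<bar>)"
  proof (rule pnorm_mono[OF assms(1)])
    fix i assume "i < n"
    then show "\<bar>u i\<bar> \<le> \<bar>c * \<bar>v i\<bar>\<bar>" using assms(3) assms(4)[of i] by (simp add: abs_mult)
  qed
  also have "\<dots> = c * pnorm n p (\<lambda>i. \<bar>v i\<bar>)" by (rule pnorm_scale[OF assms(1,2,3)])
  also have "pnorm n p (\<lambda>i. \<bar>v i\<bar>) = pnorm n p v" by (simp add: pnorm_def)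
  finally show ?thesis .
qed

lemma bernoulli_powr:
  fixes x q :: real
  assumes "0 \<le> x" "1 \<le> q"
  shows "1 + q * (x - 1) \<le> x powr q"
proof (cases "x = 0")
  case True then show ?thesis using assms by simp
next
  case False
  then have x0: "x > 0" using assms by simp
  have "convex_on {0<..} (\<lambda>x. x powr q)" using powr_convex assms by blast
  moreover have "((\<lambda>x. x powr q) has_field_derivative q) (at 1 within {0<..})"
  proof -
    have "((\<lambda>x. x powr q) has_real_derivative q * 1 powr (q - 1)) (at 1)"
      by (rule has_real_derivative_powr) auto
    then show ?thesis by (simp add: has_field_derivative_at_within)
  qed
  ultimately have "x powr q - 1 powr q \<ge> q * (x - 1)"
    using x0 by (intro convex_on_imp_above_tangent[where A="{0<..}"]) (auto simp: interior_open)
  then show ?thesis by simp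
qed

lemma power_mean_sum:
  fixes t :: "nat \<Rightarrow> real"
  assumes "1 \<le> p" "2 \<le> n" "S \<subseteq> {..<n}" "card S = n - 1" "\<And>j. 0 \<le> t j"
  shows "(\<Sum>j\<in>S. t j) / (real n - 1) \<le> pnorm n p t / root_p n p"
proof (cases "p = \<infinity>")
  case True
  have fS: "finite S" using assms(3) finite_subset by blast
  have tl: "t j \<le> pnorm n p t" if "j \<in> S" for j
  proof -
    have "j < n" using that assms(3) by auto
    then show ?thesis using pnorm_ge_comp[OF assms(1), of j n t] by (meson abs_ge_self order_trans)
  qed
  have "(\<Sum>j\<in>S. t j) \<le> of_nat (card S) * pnorm n p t" by (rule sum_bounded_above) (rule tl)
  then have "(\<Sum>j\<in>S. t j) \<le> (real n - 1) * pnorm n p t" using assms(2,4) by (simp add: of_nat_diff)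
  then show ?thesis using True assms(2) by (simp add: root_p_def field_simps)
next
  case False
  define q where "q = real_of_ereal p"
  have q1: "1 \<le> q" using real_p_ge1[OF assms(1) False] q_def by simp
  have fS: "finite S" using assms(3) finite_subset by blast
  define m where "m = real n - 1"
  have m1: "m \<ge> 1" using assms(2) m_def by simp
  have cardS: "real (card S) = m" using assms(2,4) m_def by (simp add: of_nat_diff)
  define A where "A = (\<Sum>j\<in>S. t j powr q)"
  have A0: "A \<ge> 0" unfolding A_def by (intro sum_nonneg) auto
  have AB: "A \<le> (\<Sum>j<n. \<bar>t j\<bar> powr q)"
  proof -
    have "(\<Sum>j<n. \<bar>t j\<bar> powr q) = (\<Sum>j<n. t j powr q)" using assms(5) by simp
    moreover have "A \<le> (\<Sum>j<n. t j powr q)"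
      unfolding A_def using assms(3) by (intro sum_mono2) auto
    ultimately show ?thesis by simp
  qed
  have key: "(\<Sum>j\<in>S. t j) \<le> m * (A / m) powr (1 / q)"
  proof (cases "A = 0")
    case True
    then have "\<forall>j\<in>S. t j powr q = 0" using fS unfolding A_def by (subst sum_nonneg_eq_0_iff[symmetric]) auto
    then have "\<forall>j\<in>S. t j = 0" by simp
    then show ?thesis using True by simp
  next
    case False
    with A0 have Apos: "A > 0" by simp
    define M where "M = (A / m) powr (1 / q)"
    have Mpos: "M > 0" using Apos m1 M_def by simp
    have Mq: "M powr q = A / m" using M_def q1 Apos m1 by (simp add: powr_powr)
    have "(\<Sum>j\<in>S. 1 + q * (t j / M - 1)) \<le> (\<Sum>j\<in>S. (t j / M) powr q)"
      using assms(5) Mpos q1 by (intro sum_mono bernoulli_powr) auto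
    also have "(\<Sum>j\<in>S. (t j / M) powr q) = (\<Sum>j\<in>S. t j powr q) / M powr q"
      using assms(5) Mpos by (simp add: powr_divide sum_divide_distrib)
    also have "\<dots> = m" using Mq Apos m1 A_def by simp
    finally have "(\<Sum>j\<in>S. 1 + q * (t j / M - 1)) \<le> m" .
    moreover have "(\<Sum>j\<in>S. 1 + q * (t j / M - 1)) = m + q * ((\<Sum>j\<in>S. t j) / M - m)"
      using cardS by (simp add: sum.distrib sum_distrib_left sum_subtractf sum_divide_distrib[symmetric] algebra_simps)
    ultimately have "q * ((\<Sum>j\<in>S. t j) / M - m) \<le> 0" by linarith
    then have "(\<Sum>j\<in>S. t j) / M \<le> m" using q1 by (simp add: mult_le_0_iff)
    then show ?thesis using Mpos M_def by (simp add: field_simps)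
  qed
  have "(A / m) powr (1 / q) = A powr (1/q) / m powr (1/q)" using A0 m1 by (simp add: powr_divide)
  also have "A powr (1/q) \<le> pnorm n p t"
    using AB A0 q1 False by (simp add: pnorm_fin q_def[symmetric]) (intro powr_mono2, auto)
  finally have "(A / m) powr (1 / q) \<le> pnorm n p t / m powr (1/q)"
    using m1 by (simp add: divide_right_mono)
  then have "(\<Sum>j\<in>S. t j) / m \<le> pnorm n p t / m powr (1/q)"
  proof -
    have "(\<Sum>j\<in>S. t j) / m \<le> (A / m) powr (1 / q)" using key m1 by (simp add: pos_divide_le_eq mult.commute)
    then show ?thesis using \<open>(A / m) powr (1 / q) \<le> pnorm n p t / m powr (1/q)\<close> by linarith
  qed
  then show ?thesis using False by (simp add: root_p_def m_def q_def)
qed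

lemma amgm_one_plus:
  fixes t :: "nat \<Rightarrow> real"
  assumes "finite S" "S \<noteq> {}" "\<And>j. 0 \<le> t j"
  shows "(\<Prod>j\<in>S. 1 + t j) \<le> (1 + (\<Sum>j\<in>S. t j) / card S) ^ card S"
proof -
  define P where "P = (\<Prod>j\<in>S. 1 + t j)"
  have P1: "P \<ge> 1" unfolding P_def using assms(3) by (intro prod_ge_1) auto
  have c0: "card S > 0" using assms by (simp add: card_gt_0_iff)
  have "P powr (1 / card S) \<le> (\<Sum>j\<in>S. (1 + t j) / card S)"
    unfolding P_def by (rule arith_geom_mean[OF assms(1,2)]) (use assms(3) in \<open>smt (verit)\<close>)
  also have "\<dots> = 1 + (\<Sum>j\<in>S. t j) / card S"
    using c0 by (simp add: add_divide_distrib sum.distrib sum_divide_distrib[symmetric])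
  finally have le: "P powr (1 / card S) \<le> 1 + (\<Sum>j\<in>S. t j) / card S" .
  have "P = (P powr (1 / card S)) ^ card S"
    using P1 c0 by (simp add: powr_realpow[symmetric] powr_powr)
  also have "\<dots> \<le> (1 + (\<Sum>j\<in>S. t j) / card S) ^ card S"
    using le by (intro power_mono) auto
  finally show ?thesis unfolding P_def .
qed

lemma prod_le_omega:
  fixes t :: "nat \<Rightarrow> real"
  assumes "1 \<le> p" "2 \<le> n" "i < n" "\<And>j. 0 \<le> t j"
  shows "(\<Prod>j\<in>{..<n} - {i}. 1 + t j) \<le> omega n p (pnorm n p t)"
proof -
  let ?S = "{..<n} - {i}"
  have cS: "card ?S = n - 1" using assms(3) by simp
  have ne: "?S \<noteq> {}" using assms(2,3) cS proof -
    have "(if i = 0 then 1 else 0) \<in> ?S" using assms(2,3) by auto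
    then show ?thesis by blast
  qed
  have "(\<Prod>j\<in>?S. 1 + t j) \<le> (1 + (\<Sum>j\<in>?S. t j) / card ?S) ^ card ?S"
    using amgm_one_plus[of ?S t] ne assms(4) by simp
  also have "real (card ?S) = real n - 1" using cS assms(2) by (simp add: of_nat_diff)
  also have "(1 + (\<Sum>j\<in>?S. t j) / (real n - 1)) ^ card ?S \<le> (1 + pnorm n p t / root_p n p) ^ card ?S"
  proof -
    have pm: "(\<Sum>j\<in>?S. t j) / (real n - 1) \<le> pnorm n p t / root_p n p"
      by (rule power_mean_sum[OF assms(1,2)]) (use cS assms(4) in auto)
    have nn: "0 \<le> (\<Sum>j\<in>?S. t j) / (real n - 1)"
      using assms(2,4) by (intro divide_nonneg_nonneg sum_nonneg) auto
    show ?thesis using pm nn by (intro power_mono) auto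
  qed
  finally show ?thesis using cS by (simp add: omega_def)
qed


lemma root_p_ge1: assumes "1 \<le> p" "2 \<le> n" shows "1 \<le> root_p n p"
proof (cases "p = \<infinity>")
  case True then show ?thesis by (simp add: root_p_def)
next
  case False
  have "1 \<le> real_of_ereal p" using real_p_ge1[OF assms(1) False] .
  moreover have "1 \<le> real n - 1" using assms(2) by simp
  ultimately show ?thesis using False by (simp add: root_p_def ge_one_powr_ge_zero)
qed

definition G :: "nat \<Rightarrow> ereal \<Rightarrow> real \<Rightarrow> bool" where
  "G n p t \<longleftrightarrow> 0 \<le> t \<and> Psi n p t \<le> 2"

context
  fixes n :: nat and p :: ereal
  assumes p1: "1 \<le> p" and n2: "2 \<le> n"
begin

lemma rp_pos: "0 < root_p n p" using root_p_ge1[OF p1 n2] by simp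

lemma omega_ge1: "0 \<le> t \<Longrightarrow> 1 \<le> omega n p t"
  unfolding omega_def using rp_pos by (intro one_le_power) simp

lemma omega_gt1: "0 < t \<Longrightarrow> 1 < omega n p t"
  unfolding omega_def using rp_pos n2 by (intro one_less_power) auto

lemma omega_mono: "0 \<le> s \<Longrightarrow> s \<le> t \<Longrightarrow> omega n p s \<le> omega n p t"
  unfolding omega_def using rp_pos by (intro power_mono add_left_mono divide_right_mono) auto

lemma omega_scale:
  assumes "0 \<le> c" "c \<le> 1" "0 \<le> t"
  shows "omega n p (c * t) - 1 \<le> c * (omega n p t - 1)"
  unfolding omega_def using power_scale_le[OF assms(1,2), of "t / root_p n p" "n - 1"] assms(3) rp_pos
  by (simp add: times_divide_eq_right)

lemma G_den: "G n p t \<Longrightarrow> omega n p t - 1 \<le> 1 - 2 * t * omega n p t"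
  unfolding G_def Psi_def by (simp add: algebra_simps)

lemma G_den_pos: assumes "G n p t" shows "0 < 1 - 2 * t * omega n p t"
proof (cases "t = 0")
  case True then show ?thesis by simp
next
  case False
  then have "t > 0" using assms by (simp add: G_def)
  then show ?thesis using omega_gt1[OF \<open>t > 0\<close>] G_den[OF assms] by linarith
qed

lemma G_omega_lt2: assumes "G n p t" shows "omega n p t - 1 < 1"
proof (cases "t = 0")
  case True then show ?thesis by (simp add: omega_def)
next
  case False
  then have t0: "t > 0" using assms by (simp add: G_def)
  have "0 < 2 * t * omega n p t" using t0 omega_ge1[of t] by simp
  then show ?thesis using G_den[OF assms] by linarith
qed

lemma G_t_half: assumes "G n p t" shows "2 * t < 1"
proof -
  have t0: "0 \<le> t" using assms by (simp add: G_def)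
  have "2 * t \<le> 2 * t * omega n p t" using t0 omega_ge1[OF t0] by (simp add: mult_le_cancel_left1)
  then show ?thesis using G_den_pos[OF assms] by linarith
qed

lemma phi_nonneg: assumes "G n p t" shows "0 \<le> phi n p t"
  unfolding phi_def using G_den_pos[OF assms] omega_ge1[of t] assms by (simp add: G_def)

lemma phi_le1: assumes "G n p t" shows "phi n p t \<le> 1"
  unfolding phi_def using G_den_pos[OF assms] G_den[OF assms] by simp

lemma phi_lt1: assumes "G n p t" "Psi n p t < 2" shows "phi n p t < 1"
proof -
  have "omega n p t - 1 < 1 - 2 * t * omega n p t" using assms(2) unfolding Psi_def by (simp add: algebra_simps)
  then show ?thesis unfolding phi_def using G_den_pos[OF assms(1)] by simp
qed

lemma G_mono: assumes "G n p t" "0 \<le> s" "s \<le> t" shows "G n p s"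
proof -
  have "(1 + 2 * s) * omega n p s \<le> (1 + 2 * t) * omega n p t"
    using assms omega_mono[of s t] omega_ge1[of s] by (intro mult_mono) (auto simp: G_def)
  then show ?thesis using assms by (simp add: G_def Psi_def)
qed

lemma phi_mono: assumes "G n p t" "0 \<le> s" "s \<le> t" shows "phi n p s \<le> phi n p t"
proof -
  have Gs: "G n p s" using G_mono assms by blast
  have t0: "0 \<le> t" using assms by simp
  have "s * omega n p s \<le> t * omega n p t"
    using assms omega_mono[of s t] omega_ge1[of s] by (intro mult_mono) auto
  then have "1 - 2 * t * omega n p t \<le> 1 - 2 * s * omega n p s" by simp
  then show ?thesis unfolding phi_def
    using G_den_pos[OF assms(1)] omega_mono[OF assms(2,3)] omega_ge1[OF t0]
    by (intro frac_le) auto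
qed

lemma phi_scale:
  assumes "G n p t" "0 \<le> c" "c \<le> 1"
  shows "phi n p (c * t) \<le> c * phi n p t"
proof -
  have t0: "0 \<le> t" using assms by (simp add: G_def)
  have ct: "c * t \<le> t" using assms t0 by (simp add: mult_left_le_one_le)
  have ct0: "0 \<le> c * t" using assms t0 by simp
  have "c * t * omega n p (c * t) \<le> t * omega n p t"
    using ct ct0 omega_mono[OF ct0 ct] omega_ge1[OF ct0] t0 by (intro mult_mono) auto
  then have den: "1 - 2 * t * omega n p t \<le> 1 - 2 * (c * t) * omega n p (c * t)" by simp
  have "phi n p (c * t) \<le> (c * (omega n p t - 1)) / (1 - 2 * t * omega n p t)"
    unfolding phi_def
    using G_den_pos[OF assms(1)] omega_scale[OF assms(2,3) t0] den omega_ge1[OF t0] assms(2)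
    by (intro frac_le) auto
  then show ?thesis unfolding phi_def by simp
qed

lemma phi_le_scaled:
  assumes "G n p t" "0 \<le> c" "c \<le> 1" "0 \<le> s" "s \<le> c * t"
  shows "phi n p s \<le> c * phi n p t"
proof -
  have t0: "0 \<le> t" using assms by (simp add: G_def)
  have "c * t \<le> t" using assms t0 by (simp add: mult_left_le_one_le)
  then have "G n p (c * t)" using G_mono[OF assms(1)] assms t0 by simp
  then have "phi n p s \<le> phi n p (c * t)" using phi_mono assms by blast
  also have "\<dots> \<le> c * phi n p t" using phi_scale assms by blast
  finally show ?thesis .
qed

end

definition dist_vec :: "nat \<Rightarrow> (nat \<Rightarrow> 'a) \<Rightarrow> bool" where
  "dist_vec n x \<longleftrightarrow> (\<forall>i<n. \<forall>j<n. i \<noteq> j \<longrightarrow> x i \<noteq> x j)"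

locale wsetting =
  fixes nv :: "'a::field \<Rightarrow> real" and f :: "'a poly" and n :: nat and \<xi> :: "nat \<Rightarrow> 'a" and p :: ereal
  assumes nv: "abs_value nv" and deg: "degree f = n" and n2: "2 \<le> n"
    and root: "root_vector f n \<xi>" and p1: "1 \<le> p"
begin

lemma n0: "0 < n" using n2 by simp

lemma lc_nz: "lead_coeff f \<noteq> 0"
  using deg n2 by (metis degree_0 leading_coeff_0_iff not_numeral_le_zero)

lemma poly_split:
  assumes "i < n"
  shows "poly f z = lead_coeff f * (z - \<xi> i) * (\<Prod>j\<in>{..<n} - {i}. z - \<xi> j)"
proof -
  have "(\<Prod>k<n. z - \<xi> k) = (z - \<xi> i) * (\<Prod>j\<in>{..<n} - {i}. z - \<xi> j)"
    using assms by (subst prod.remove[of _ i]) auto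
  then show ?thesis using root by (simp add: root_vector_def)
qed

lemma Sne: "i < n \<Longrightarrow> {..<n} - {i} \<noteq> {}"
proof -
  assume "i < n"
  then have "(if i = 0 then 1 else 0) \<in> {..<n} - {i}" using n2 by auto
  then show ?thesis by blast
qed

lemma Sne': "{..<n} - {i} \<noteq> {}"
proof (cases "i < n")
  case True then show ?thesis using Sne by blast
next
  case False then have "0 \<in> {..<n} - {i}" using n2 by auto
  then show ?thesis by blast
qed

lemma dvec_nonneg: "0 \<le> dvec nv n x i"
  unfolding dvec_def using Sne'[of i] nv_ge0[OF nv] by (subst Min_ge_iff) auto

lemma dvec_pos: assumes "dist_vec n x" "i < n" shows "0 < dvec nv n x i"
  unfolding dvec_def using Sne[OF assms(2)] assms nv_eq0[OF nv] nv_ge0[OF nv]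
  by (subst Min_gr_iff) (auto simp: dist_vec_def less_le)

lemma dvec_le: assumes "j < n" "j \<noteq> i" shows "dvec nv n x i \<le> nv (x i - x j)"
  unfolding dvec_def using assms by (intro Min_le) auto

definition td :: "(nat \<Rightarrow> 'a) \<Rightarrow> nat \<Rightarrow> real" where
  "td x i = nv (x i - \<xi> i) / dvec nv n x i"

lemma Efun_td: "Efun nv n p \<xi> x = pnorm n p (td x)"
  by (simp add: Efun_def td_def[abs_def])

lemma td_nonneg: "0 \<le> td x i"
  unfolding td_def using nv_ge0[OF nv] dvec_nonneg by simp

lemma td_le: assumes "i < n" shows "td x i \<le> Efun nv n p \<xi> x"
  using pnorm_ge_comp[OF p1 assms, of "td x"] td_nonneg[of x i] by (simp add: Efun_td)

lemma e_eq: assumes "dist_vec n x" "i < n" shows "nv (x i - \<xi> i) = td x i * dvec nv n x i"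
  using dvec_pos[OF assms] by (simp add: td_def)

lemma Efun_nonneg: "0 \<le> Efun nv n p \<xi> x"
  by (simp add: Efun_td pnorm_nonneg[OF p1 n0])

lemma e_le: assumes "dist_vec n x" "i < n" "j < n" "j \<noteq> i"
  shows "nv (x i - \<xi> i) \<le> Efun nv n p \<xi> x * nv (x i - x j)"
proof -
  have "nv (x i - \<xi> i) = td x i * dvec nv n x i" by (rule e_eq[OF assms(1,2)])
  also have "\<dots> \<le> Efun nv n p \<xi> x * nv (x i - x j)"
    using td_le[OF assms(2)] dvec_le[OF assms(3,4)] td_nonneg dvec_nonneg Efun_nonneg
    by (intro mult_mono) auto
  finally show ?thesis .
qed

end

context wsetting begin

lemma step_lemma:
  assumes dx: "dist_vec n x" and i: "i < n" and D0: "0 < D" and b0: "0 \<le> \<beta>" and bD: "\<beta> \<le> D"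
    and hyD: "\<And>j. j < n \<Longrightarrow> j \<noteq> i \<Longrightarrow> D * nv (x i - x j) \<le> nv (x i - y j)"
    and hyb: "\<And>j. j < n \<Longrightarrow> j \<noteq> i \<Longrightarrow> nv (y j - \<xi> j) \<le> \<beta> * nv (x j - \<xi> j)"
  shows "(\<forall>j<n. j \<noteq> i \<longrightarrow> x i \<noteq> y j)"
    and "nv (x i - poly f (x i) / (lead_coeff f * (\<Prod>j\<in>{..<n} - {i}. x i - y j)) - \<xi> i)
          \<le> (\<beta> / D) * (omega n p (Efun nv n p \<xi> x) - 1) * nv (x i - \<xi> i)"
proof -
  define S where "S = {..<n} - {i}"
  have fS: "finite S" by (simp add: S_def)
  have xx: "0 < nv (x i - x j)" if "j \<in> S" for j
    using that dx i nv_eq0[OF nv] nv_ge0[OF nv] by (auto simp: S_def dist_vec_def less_le)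
  have pos: "0 < nv (x i - y j)" if "j \<in> S" for j
  proof -
    have j: "j < n" "j \<noteq> i" using that by (auto simp: S_def)
    have "0 < D * nv (x i - x j)" using D0 xx[OF that] by simp
    then show ?thesis using hyD[OF j] by linarith
  qed
  have ne: "x i - y j \<noteq> 0" if "j \<in> S" for j
  proof
    assume "x i - y j = 0"
    then have "nv (x i - y j) = 0" using nv_eq0[OF nv] by simp
    with pos[OF that] show False by simp
  qed
  then show "\<forall>j<n. j \<noteq> i \<longrightarrow> x i \<noteq> y j" by (auto simp: S_def)
  define u where "u j = (y j - \<xi> j) / (x i - y j)" for j
  define P where "P = (\<Prod>j\<in>S. 1 + u j)"
  have u1: "1 + u j = (x i - \<xi> j) / (x i - y j)" if "j \<in> S" for j
    using ne[OF that] by (simp add: u_def field_simps)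
  have Peq: "P = (\<Prod>j\<in>S. x i - \<xi> j) / (\<Prod>j\<in>S. x i - y j)"
    unfolding P_def using u1 by (simp add: prod_dividef)
  have pne: "(\<Prod>j\<in>S. x i - y j) \<noteq> 0" using ne fS by simp
  have eq: "x i - poly f (x i) / (lead_coeff f * (\<Prod>j\<in>S. x i - y j)) - \<xi> i = (x i - \<xi> i) * (1 - P)"
  proof -
    have pf: "poly f (x i) = lead_coeff f * (x i - \<xi> i) * (\<Prod>j\<in>S. x i - \<xi> j)"
      using poly_split[OF i, of "x i"] by (simp add: S_def)
    have "poly f (x i) / (lead_coeff f * (\<Prod>j\<in>S. x i - y j)) = (x i - \<xi> i) * P"
      unfolding pf Peq using lc_nz pne by (simp add: field_simps)
    then show ?thesis by (simp add: algebra_simps)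
  qed
  define c where "c = \<beta> / D"
  have c0: "0 \<le> c" "c \<le> 1" using b0 bD D0 by (auto simp: c_def)
  have unv: "nv (u j) \<le> c * td x j" if "j \<in> S" for j
  proof -
    have j: "j < n" "j \<noteq> i" using that by (auto simp: S_def)
    have dj: "0 < dvec nv n x j" using dvec_pos[OF dx j(1)] .
    have dle: "dvec nv n x j \<le> nv (x i - x j)"
      using dvec_le[OF i j(2)[symmetric], of x] nv_commute[OF nv] by simp
    have "nv (u j) = nv (y j - \<xi> j) / nv (x i - y j)" by (simp add: u_def nv_divide[OF nv])
    also have "\<dots> \<le> (\<beta> * nv (x j - \<xi> j)) / (D * nv (x i - x j))"
      using hyb[OF j] hyD[OF j] D0 xx[OF that] b0 nv_ge0[OF nv]
      by (intro frac_le) auto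
    also have "\<dots> \<le> (\<beta> * nv (x j - \<xi> j)) / (D * dvec nv n x j)"
      using dle dj D0 b0 nv_ge0[OF nv] by (intro divide_left_mono mult_left_mono) auto
    also have "\<dots> = c * td x j" by (simp add: c_def td_def)
    finally show ?thesis .
  qed
  have "nv (P - 1) \<le> (\<Prod>j\<in>S. 1 + nv (u j)) - 1"
    unfolding P_def by (rule prod_one_plus_dev[OF nv fS])
  also have "(\<Prod>j\<in>S. 1 + nv (u j)) \<le> (\<Prod>j\<in>S. 1 + c * td x j)"
    using unv nv_ge0[OF nv] by (intro prod_mono) auto
  also have "(\<Prod>j\<in>S. 1 + c * td x j) - 1 \<le> c * ((\<Prod>j\<in>S. 1 + td x j) - 1)"
    using prod_scale_le[OF fS c0] td_nonneg by blast
  also have "(\<Prod>j\<in>S. 1 + td x j) \<le> omega n p (Efun nv n p \<xi> x)"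
    unfolding S_def Efun_td using prod_le_omega[OF p1 n2 i] td_nonneg by blast
  finally have "nv (P - 1) \<le> c * (omega n p (Efun nv n p \<xi> x) - 1)"
    using c0 by (simp add: mult_left_mono)
  moreover have "nv (1 - P) = nv (P - 1)" by (rule nv_commute[OF nv])
  ultimately have "nv (x i - poly f (x i) / (lead_coeff f * (\<Prod>j\<in>S. x i - y j)) - \<xi> i)
       \<le> nv (x i - \<xi> i) * (c * (omega n p (Efun nv n p \<xi> x) - 1))"
    unfolding eq using nv_mult[OF nv] nv_ge0[OF nv] by (simp add: mult_left_mono)
  then show "nv (x i - poly f (x i) / (lead_coeff f * (\<Prod>j\<in>{..<n} - {i}. x i - y j)) - \<xi> i)
          \<le> (\<beta> / D) * (omega n p (Efun nv n p \<xi> x) - 1) * nv (x i - \<xi> i)"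
    by (simp add: S_def c_def algebra_simps)
qed

end

context wsetting begin

lemma key_lemma:
  assumes dx: "dist_vec n x" and Gt: "G n p (Efun nv n p \<xi> x)"
  shows "x \<in> WD f n (Suc N) \<and>
    (\<forall>i<n. nv (WT f n (Suc N) x i - \<xi> i)
       \<le> (omega n p (Efun nv n p \<xi> x) - 1) *
          ((omega n p (Efun nv n p \<xi> x) - 1) / (1 - omega n p (Efun nv n p \<xi> x) * Efun nv n p \<xi> x)) ^ N
          * nv (x i - \<xi> i))"
proof (induction N)
  let ?t = "Efun nv n p \<xi> x"
  let ?W = "omega n p ?t"
  case 0
  have "x \<in> WD f n (Suc 0)" using dx by (simp add: dist_vec_def)
  moreover have "nv (WT f n (Suc 0) x i - \<xi> i) \<le> (?W - 1) * nv (x i - \<xi> i)" if i: "i < n" for i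
    using step_lemma(2)[OF dx i, of 1 1 x] by simp
  ultimately show ?case by simp
next
  let ?t = "Efun nv n p \<xi> x"
  let ?W = "omega n p ?t"
  let ?g = "(?W - 1) / (1 - ?W * ?t)"
  case (Suc N)
  define y where "y = WT f n (Suc N) x"
  define \<beta> where "\<beta> = (?W - 1) * ?g ^ N"
  define D where "D = 1 - ?W * ?t"
  have t0: "0 \<le> ?t" by (rule Efun_nonneg)
  have W1: "1 \<le> ?W" using omega_ge1[OF p1 n2 t0] .
  have den2: "0 < 1 - 2 * ?t * ?W" using G_den_pos[OF p1 n2 Gt] .
  have Wd: "?W - 1 \<le> 1 - 2 * ?t * ?W" using G_den[OF p1 n2 Gt] .
  have Wt0: "0 \<le> ?W * ?t" using W1 t0 by simp
  have D0: "0 < D" using den2 Wt0 by (simp add: D_def algebra_simps)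
  have WD': "?W - 1 \<le> D" using Wd Wt0 by (simp add: D_def algebra_simps)
  have g0: "0 \<le> ?g" using W1 D0 by (simp add: D_def)
  have g1: "?g \<le> 1" using WD' D0 by (simp add: D_def)
  have b0: "0 \<le> \<beta>" using W1 g0 by (simp add: \<beta>_def)
  have bW: "\<beta> \<le> ?W - 1" unfolding \<beta>_def using W1 g0 g1
    by (simp add: mult_left_le power_le_one)
  have bD: "\<beta> \<le> D" using bW WD' by simp
  have IHy: "\<And>j. j < n \<Longrightarrow> nv (y j - \<xi> j) \<le> \<beta> * nv (x j - \<xi> j)"
    using Suc.IH by (simp add: y_def \<beta>_def)
  have hyD: "D * nv (x i - x j) \<le> nv (x i - y j)" if "i < n" "j < n" "j \<noteq> i" for i j
  proof -
    have "nv (y j - x j) \<le> nv (y j - \<xi> j) + nv (\<xi> j - x j)" by (rule nv_tri[OF nv])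
    also have "\<dots> \<le> \<beta> * nv (x j - \<xi> j) + nv (x j - \<xi> j)"
      using IHy[OF that(2)] nv_commute[OF nv, of "\<xi> j" "x j"] by simp
    also have "\<dots> = (1 + \<beta>) * nv (x j - \<xi> j)" by (simp add: algebra_simps)
    also have "\<dots> \<le> ?W * (?t * nv (x i - x j))"
    proof -
      have "nv (x j - \<xi> j) \<le> ?t * nv (x j - x i)" using e_le[OF dx that(2,1) that(3)[symmetric]] .
      also have "nv (x j - x i) = nv (x i - x j)" by (rule nv_commute[OF nv])
      finally have "nv (x j - \<xi> j) \<le> ?t * nv (x i - x j)" .
      moreover have "1 + \<beta> \<le> ?W" using bW by simp
      ultimately show ?thesis using b0 nv_ge0[OF nv] by (intro mult_mono) auto
    qed
    finally have "nv (y j - x j) \<le> ?W * ?t * nv (x i - x j)" by (simp add: mult.assoc)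
    moreover have "nv (x i - y j) \<ge> nv (x i - x j) - nv (y j - x j)" by (rule nv_diff_ge[OF nv])
    ultimately show ?thesis by (simp add: D_def algebra_simps)
  qed
  have st1: "\<forall>j<n. j \<noteq> i \<longrightarrow> x i \<noteq> y j" if "i < n" for i
    using step_lemma(1)[OF dx that D0 b0 bD hyD[OF that] IHy] by blast
  have st2: "nv (WT f n (Suc (Suc N)) x i - \<xi> i) \<le> (\<beta> / D) * (?W - 1) * nv (x i - \<xi> i)" if "i < n" for i
    using step_lemma(2)[OF dx that D0 b0 bD hyD[OF that] IHy] by (simp add: y_def)
  have "x \<in> WD f n (Suc (Suc N))" using Suc.IH st1 by (simp add: y_def)
  moreover have "(\<beta> / D) * (?W - 1) = (?W - 1) * ?g ^ Suc N"
    by (simp add: \<beta>_def D_def)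
  ultimately show ?case using st2 by simp
qed

end

context wsetting begin

lemma E_lemma:
  assumes dx: "dist_vec n x" and Gt: "G n p (Efun nv n p \<xi> x)"
    and mu0: "0 \<le> \<mu>" and muW: "\<mu> \<le> omega n p (Efun nv n p \<xi> x) - 1"
    and hy: "\<And>i. i < n \<Longrightarrow> nv (y i - \<xi> i) \<le> \<mu> * nv (x i - \<xi> i)"
  shows "dist_vec n y \<and>
    Efun nv n p \<xi> y \<le> \<mu> / (1 - 2 * omega n p (Efun nv n p \<xi> x) * Efun nv n p \<xi> x) * Efun nv n p \<xi> x"
proof -
  let ?t = "Efun nv n p \<xi> x"
  let ?W = "omega n p ?t"
  define K where "K = 1 - 2 * ?W * ?t"
  have t0: "0 \<le> ?t" by (rule Efun_nonneg)
  have W1: "1 \<le> ?W" using omega_ge1[OF p1 n2 t0] .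
  have K0: "0 < K" using G_den_pos[OF p1 n2 Gt] by (simp add: K_def mult_ac)
  have near: "nv (y i - x i) \<le> ?W * ?t * nv (x i - x j)" if "i < n" "j < n" "j \<noteq> i" for i j
  proof -
    have "nv (y i - x i) \<le> nv (y i - \<xi> i) + nv (\<xi> i - x i)" by (rule nv_tri[OF nv])
    also have "\<dots> \<le> \<mu> * nv (x i - \<xi> i) + nv (x i - \<xi> i)"
      using hy[OF that(1)] nv_commute[OF nv, of "\<xi> i" "x i"] by simp
    also have "\<dots> = (1 + \<mu>) * nv (x i - \<xi> i)" by (simp add: algebra_simps)
    also have "\<dots> \<le> ?W * (?t * nv (x i - x j))"
      using e_le[OF dx that] muW mu0 nv_ge0[OF nv] by (intro mult_mono) auto
    finally show ?thesis by (simp add: mult.assoc)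
  qed
  have yy: "K * nv (x i - x j) \<le> nv (y i - y j)" if "i < n" "j < n" "j \<noteq> i" for i j
  proof -
    have "nv (x i - x j) \<le> nv (x i - y i) + nv (y i - x j)" by (rule nv_tri[OF nv])
    also have "nv (y i - x j) \<le> nv (y i - y j) + nv (y j - x j)" by (rule nv_tri[OF nv])
    finally have "nv (x i - x j) \<le> nv (y i - x i) + nv (y i - y j) + nv (y j - x j)"
      using nv_commute[OF nv, of "x i" "y i"] by simp
    moreover have "nv (y j - x j) \<le> ?W * ?t * nv (x i - x j)"
      using near[OF that(2,1) that(3)[symmetric]] nv_commute[OF nv, of "x j" "x i"] by simp
    moreover have "nv (y i - x i) \<le> ?W * ?t * nv (x i - x j)" using near[OF that] .
    ultimately show ?thesis by (simp add: K_def algebra_simps)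
  qed
  have dy: "dist_vec n y" unfolding dist_vec_def
  proof (intro allI impI)
    fix i j assume ij: "i < n" "j < n" "i \<noteq> j"
    have "0 < nv (x i - x j)" using dx ij nv_eq0[OF nv] nv_ge0[OF nv] by (auto simp: dist_vec_def less_le)
    then have "0 < K * nv (x i - x j)" using K0 by simp
    moreover have "K * nv (x i - x j) \<le> nv (y i - y j)" using yy[OF ij(1,2)] ij(3) by simp
    ultimately have pos: "0 < nv (y i - y j)" by linarith
    show "y i \<noteq> y j"
    proof
      assume "y i = y j"
      then have "nv (y i - y j) = 0" using nv_eq0[OF nv] by simp
      then show False using pos by simp
    qed
  qed
  have dvy: "K * dvec nv n x i \<le> dvec nv n y i" if i: "i < n" for i
  proof -
    have "K * dvec nv n x i \<le> Min ((\<lambda>j. nv (y i - y j)) ` ({..<n} - {i}))"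
    proof (rule Min.boundedI)
      show "finite ((\<lambda>j. nv (y i - y j)) ` ({..<n} - {i}))" by simp
      show "(\<lambda>j. nv (y i - y j)) ` ({..<n} - {i}) \<noteq> {}" using Sne[OF i] by simp
    next
      fix a assume "a \<in> (\<lambda>j. nv (y i - y j)) ` ({..<n} - {i})"
      then obtain j where j: "j < n" "j \<noteq> i" and a: "a = nv (y i - y j)" by auto
      have "K * dvec nv n x i \<le> K * nv (x i - x j)" using dvec_le[OF j] K0 by simp
      also have "\<dots> \<le> a" using yy[OF i j] a by simp
      finally show "K * dvec nv n x i \<le> a" .
    qed
    then show ?thesis by (simp add: dvec_def)
  qed
  have "Efun nv n p \<xi> y \<le> (\<mu> / K) * pnorm n p (td x)"
    unfolding Efun_def
  proof (rule pnorm_le_scale[OF p1 n0])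
    show "0 \<le> \<mu> / K" using mu0 K0 by simp
  next
    fix i assume i: "i < n"
    have dxp: "0 < dvec nv n x i" using dvec_pos[OF dx i] .
    have "nv (y i - \<xi> i) / dvec nv n y i \<le> (\<mu> * nv (x i - \<xi> i)) / (K * dvec nv n x i)"
      using hy[OF i] dvy[OF i] K0 dxp mu0 nv_ge0[OF nv] by (intro frac_le) auto
    also have "\<dots> = (\<mu> / K) * td x i" by (simp add: td_def)
    finally show "\<bar>nv (y i - \<xi> i) / dvec nv n y i\<bar> \<le> \<mu> / K * \<bar>td x i\<bar>"
      using nv_ge0[OF nv] dvec_nonneg td_nonneg by simp
  qed
  then show ?thesis using dy by (simp add: Efun_td K_def mult_ac)
qed

end

context wsetting begin

lemma one_step:
  assumes dz: "dist_vec n z" and Gt: "G n p (Efun nv n p \<xi> z)" and N1: "1 \<le> N"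
  shows "z \<in> WD f n N"
    and "\<And>i. i < n \<Longrightarrow> nv (WT f n N z i - \<xi> i) \<le> phi n p (Efun nv n p \<xi> z) ^ N * nv (z i - \<xi> i)"
    and "\<And>i. i < n \<Longrightarrow> nv (WT f n N z i - \<xi> i) \<le> (omega n p (Efun nv n p \<xi> z) - 1) * nv (z i - \<xi> i)"
    and "dist_vec n (WT f n N z)"
    and "Efun nv n p \<xi> (WT f n N z) \<le> phi n p (Efun nv n p \<xi> z) ^ N * Efun nv n p \<xi> z"
proof -
  obtain M where M: "N = Suc M" using N1 by (cases N) auto
  let ?t = "Efun nv n p \<xi> z"
  let ?W = "omega n p ?t"
  let ?g = "(?W - 1) / (1 - ?W * ?t)"
  let ?ph = "phi n p ?t"
  define \<beta> where "\<beta> = (?W - 1) * ?g ^ M"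
  have KL: "z \<in> WD f n (Suc M) \<and> (\<forall>i<n. nv (WT f n (Suc M) z i - \<xi> i) \<le> \<beta> * nv (z i - \<xi> i))"
    using key_lemma[OF dz Gt, of M] by (simp add: \<beta>_def)
  have t0: "0 \<le> ?t" by (rule Efun_nonneg)
  have W1: "1 \<le> ?W" using omega_ge1[OF p1 n2 t0] .
  have den2: "0 < 1 - 2 * ?t * ?W" using G_den_pos[OF p1 n2 Gt] .
  have Wd: "?W - 1 \<le> 1 - 2 * ?t * ?W" using G_den[OF p1 n2 Gt] .
  have Wt0: "0 \<le> ?W * ?t" using W1 t0 by simp
  have dd: "1 - 2 * ?t * ?W \<le> 1 - ?W * ?t" using Wt0 by (simp add: algebra_simps)
  have Dp: "0 < 1 - ?W * ?t" using den2 dd by linarith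
  have g0: "0 \<le> ?g" using W1 Dp by simp
  have gph: "?g \<le> ?ph" unfolding phi_def using W1 den2 dd by (intro divide_left_mono) (auto simp: mult_ac)
  have ph1: "?ph \<le> 1" using phi_le1[OF p1 n2 Gt] .
  have ph0: "0 \<le> ?ph" using phi_nonneg[OF p1 n2 Gt] .
  have "(?W - 1) * (1 - 2 * ?t * ?W) \<le> (?W - 1)"
    using W1 den2 t0 by (intro mult_left_le) auto
  then have Wph: "?W - 1 \<le> ?ph" unfolding phi_def using den2 by (simp add: le_divide_eq)
  have g1: "?g \<le> 1" using gph ph1 by simp
  have b0: "0 \<le> \<beta>" using W1 g0 by (simp add: \<beta>_def)
  have bW: "\<beta> \<le> ?W - 1" unfolding \<beta>_def using W1 g0 g1
    by (simp add: mult_left_le power_le_one)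
  have gM: "?g ^ M \<le> ?ph ^ M" using g0 gph by (intro power_mono) auto
  have bph: "\<beta> \<le> ?ph ^ N" unfolding \<beta>_def M using Wph gM W1 g0 ph0
    by (simp) (intro mult_mono, auto)
  show "z \<in> WD f n N" using KL M by simp
  show "nv (WT f n N z i - \<xi> i) \<le> ?ph ^ N * nv (z i - \<xi> i)" if "i < n" for i
    using KL M that bph nv_ge0[OF nv] by (meson mult_right_mono order_trans)
  show "nv (WT f n N z i - \<xi> i) \<le> (?W - 1) * nv (z i - \<xi> i)" if "i < n" for i
    using KL M that bW nv_ge0[OF nv] by (meson mult_right_mono order_trans)
  have EL: "dist_vec n (WT f n N z) \<and> Efun nv n p \<xi> (WT f n N z) \<le> \<beta> / (1 - 2 * ?W * ?t) * ?t"
    using E_lemma[OF dz Gt b0 bW] KL M by simp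
  then show "dist_vec n (WT f n N z)" by simp
  have "\<beta> / (1 - 2 * ?W * ?t) = ?ph * ?g ^ M"
    unfolding \<beta>_def phi_def by (simp add: mult_ac)
  also have "\<dots> \<le> ?ph * ?ph ^ M" using gM ph0 by (simp add: mult_left_mono)
  also have "\<dots> = ?ph ^ N" using M by simp
  finally have "\<beta> / (1 - 2 * ?W * ?t) * ?t \<le> ?ph ^ N * ?t" using t0 by (rule mult_right_mono)
  then show "Efun nv n p \<xi> (WT f n N z) \<le> ?ph ^ N * ?t" using EL by linarith
qed

end

lemma exp_id: "(1::nat) \<le> a \<Longrightarrow> a * N + (a - 1) = a * (N + 1) - 1"
  by (cases a) auto

locale witer = wsetting +
  fixes x :: "nat \<Rightarrow> nat \<Rightarrow> 'a" and N :: nat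
  assumes N1: "1 \<le> N" and dist0: "dist_vec n (x 0)" and init: "G n p (Efun nv n p \<xi> (x 0))"
    and iter: "\<And>k. x (Suc k) = WT f n N (x k)"
begin

abbreviation "t0 \<equiv> Efun nv n p \<xi> (x 0)"
abbreviation "lam \<equiv> phi n p t0"

lemma lam0: "0 \<le> lam" using phi_nonneg[OF p1 n2 init] .
lemma lam1: "lam \<le> 1" using phi_le1[OF p1 n2 init] .
lemma t00: "0 \<le> t0" by (rule Efun_nonneg)

lemma invariant:
  "dist_vec n (x k) \<and> Efun nv n p \<xi> (x k) \<le> lam ^ ((N + 1) ^ k - 1) * t0
   \<and> (\<forall>i<n. nv (x k i - \<xi> i) \<le> lam ^ ((N + 1) ^ k - 1) * nv (x 0 i - \<xi> i))"
proof (induction k)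
  case 0 then show ?case using dist0 by simp
next
  case (Suc k)
  define a where "a = (N + 1) ^ k"
  have a1: "1 \<le> a" unfolding a_def by simp
  define \<theta> where "\<theta> = lam ^ (a - 1)"
  have th0: "0 \<le> \<theta>" using lam0 by (simp add: \<theta>_def)
  have th1: "\<theta> \<le> 1" using lam0 lam1 by (simp add: \<theta>_def power_le_one)
  have dk: "dist_vec n (x k)" using Suc.IH by simp
  have tk: "Efun nv n p \<xi> (x k) \<le> \<theta> * t0" using Suc.IH by (simp add: \<theta>_def a_def)
  have ek: "\<And>i. i < n \<Longrightarrow> nv (x k i - \<xi> i) \<le> \<theta> * nv (x 0 i - \<xi> i)"
    using Suc.IH by (simp add: \<theta>_def a_def)
  have tk0: "0 \<le> Efun nv n p \<xi> (x k)" by (rule Efun_nonneg)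
  have "\<theta> * t0 \<le> t0" by (rule mult_left_le_one_le[OF t00 th0 th1])
  then have Gk: "G n p (Efun nv n p \<xi> (x k))" using G_mono[OF p1 n2 init tk0] tk by simp
  have "phi n p (Efun nv n p \<xi> (x k)) \<le> \<theta> * lam"
    using phi_le_scaled[OF p1 n2 init th0 th1 tk0 tk] .
  also have "\<theta> * lam = lam ^ a"
  proof -
    have "\<theta> * lam = lam ^ Suc (a - 1)" by (simp add: \<theta>_def power_Suc2)
    also have "Suc (a - 1) = a" using a1 by simp
    finally show ?thesis .
  qed
  finally have phk: "phi n p (Efun nv n p \<xi> (x k)) \<le> lam ^ a" .
  have phk0: "0 \<le> phi n p (Efun nv n p \<xi> (x k))" using phi_nonneg[OF p1 n2 Gk] .
  have phN: "phi n p (Efun nv n p \<xi> (x k)) ^ N \<le> lam ^ (a * N)"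
    using power_mono[OF phk phk0, of N] by (simp add: power_mult)
  have expo: "lam ^ (a * N) * \<theta> = lam ^ ((N + 1) ^ Suc k - 1)"
    using exp_id[OF a1, of N] by (simp add: \<theta>_def a_def power_add[symmetric] mult_ac)
  have lamaN0: "0 \<le> lam ^ (a * N)" using lam0 by simp
  have "dist_vec n (x (Suc k))" using one_step(4)[OF dk Gk N1] iter by simp
  moreover have "Efun nv n p \<xi> (x (Suc k)) \<le> lam ^ ((N + 1) ^ Suc k - 1) * t0"
  proof -
    have "Efun nv n p \<xi> (x (Suc k)) \<le> phi n p (Efun nv n p \<xi> (x k)) ^ N * Efun nv n p \<xi> (x k)"
      using one_step(5)[OF dk Gk N1] iter by simp
    also have "\<dots> \<le> lam ^ (a * N) * (\<theta> * t0)"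
      using phN tk tk0 lamaN0 by (intro mult_mono) auto
    also have "\<dots> = lam ^ ((N + 1) ^ Suc k - 1) * t0" using expo by (simp add: mult_ac)
    finally show ?thesis .
  qed
  moreover have "nv (x (Suc k) i - \<xi> i) \<le> lam ^ ((N + 1) ^ Suc k - 1) * nv (x 0 i - \<xi> i)" if i: "i < n" for i
  proof -
    have "nv (x (Suc k) i - \<xi> i) \<le> phi n p (Efun nv n p \<xi> (x k)) ^ N * nv (x k i - \<xi> i)"
      using one_step(2)[OF dk Gk N1 i] iter by simp
    also have "\<dots> \<le> lam ^ (a * N) * (\<theta> * nv (x 0 i - \<xi> i))"
      using phN ek[OF i] nv_ge0[OF nv] lamaN0 by (intro mult_mono) auto
    also have "\<dots> = lam ^ ((N + 1) ^ Suc k - 1) * nv (x 0 i - \<xi> i)" using expo by (simp add: mult_ac)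
    finally show ?thesis .
  qed
  ultimately show ?case by blast
qed

end

context witer begin

lemma dist_k: "dist_vec n (x k)" using invariant by blast

lemma t_k: "Efun nv n p \<xi> (x k) \<le> t0"
proof -
  have "Efun nv n p \<xi> (x k) \<le> lam ^ ((N + 1) ^ k - 1) * t0" using invariant by blast
  also have "\<dots> \<le> t0" using lam0 lam1 t00 by (intro mult_left_le_one_le) (auto simp: power_le_one)
  finally show ?thesis .
qed

lemma G_k: "G n p (Efun nv n p \<xi> (x k))"
  using G_mono[OF p1 n2 init Efun_nonneg t_k] .

lemma wd_k: "x k \<in> WD f n N" using one_step(1)[OF dist_k G_k N1] .

lemma phi_k: "phi n p (Efun nv n p \<xi> (x k)) \<le> lam ^ ((N + 1) ^ k)"
proof -
  define a where "a = (N + 1) ^ k"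
  have a1: "1 \<le> a" unfolding a_def by simp
  define \<theta> where "\<theta> = lam ^ (a - 1)"
  have th0: "0 \<le> \<theta>" using lam0 by (simp add: \<theta>_def)
  have th1: "\<theta> \<le> 1" using lam0 lam1 by (simp add: \<theta>_def power_le_one)
  have tk: "Efun nv n p \<xi> (x k) \<le> \<theta> * t0" using invariant by (simp add: \<theta>_def a_def)
  have "phi n p (Efun nv n p \<xi> (x k)) \<le> \<theta> * lam"
    using phi_le_scaled[OF p1 n2 init th0 th1 Efun_nonneg tk] .
  also have "\<theta> * lam = lam ^ Suc (a - 1)" by (simp add: \<theta>_def power_Suc2)
  also have "Suc (a - 1) = a" using a1 by simp
  finally show ?thesis by (simp add: a_def)
qed

lemma err1: "i < n \<Longrightarrow> nv (x (Suc k) i - \<xi> i) \<le> lam ^ (N * (N + 1) ^ k) * nv (x k i - \<xi> i)"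
proof -
  assume i: "i < n"
  have phk0: "0 \<le> phi n p (Efun nv n p \<xi> (x k))" using phi_nonneg[OF p1 n2 G_k] .
  have phN: "phi n p (Efun nv n p \<xi> (x k)) ^ N \<le> lam ^ (N * (N + 1) ^ k)"
    using power_mono[OF phi_k phk0, of N] by (simp add: power_mult[symmetric] mult_ac)
  have "nv (x (Suc k) i - \<xi> i) \<le> phi n p (Efun nv n p \<xi> (x k)) ^ N * nv (x k i - \<xi> i)"
    using one_step(2)[OF dist_k G_k N1 i] iter by simp
  also have "\<dots> \<le> lam ^ (N * (N + 1) ^ k) * nv (x k i - \<xi> i)"
    using phN nv_ge0[OF nv] by (intro mult_right_mono) auto
  finally show ?thesis .
qed

lemma err2: "i < n \<Longrightarrow> nv (x k i - \<xi> i) \<le> lam ^ ((N + 1) ^ k - 1) * nv (x 0 i - \<xi> i)"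
  using invariant by blast

abbreviation "q0 \<equiv> omega n p t0 - 1"

lemma q0: "0 \<le> q0" "q0 < 1"
  using omega_ge1[OF p1 n2 t00] G_omega_lt2[OF p1 n2 init] by auto

lemma err_geom: "i < n \<Longrightarrow> nv (x k i - \<xi> i) \<le> q0 ^ k * nv (x 0 i - \<xi> i)"
proof (induction k)
  case 0 then show ?case by simp
next
  case (Suc k)
  have "nv (x (Suc k) i - \<xi> i) \<le> (omega n p (Efun nv n p \<xi> (x k)) - 1) * nv (x k i - \<xi> i)"
    using one_step(3)[OF dist_k G_k N1 Suc.prems] iter by simp
  also have "\<dots> \<le> q0 * nv (x k i - \<xi> i)"
    using omega_mono[OF p1 n2 Efun_nonneg t_k] nv_ge0[OF nv] by (intro mult_right_mono) auto
  also have "\<dots> \<le> q0 * (q0 ^ k * nv (x 0 i - \<xi> i))"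
    using Suc q0 by (intro mult_left_mono) auto
  finally show ?case by (simp add: mult_ac)
qed

lemma conv: "i < n \<Longrightarrow> (\<lambda>k. nv (x k i - \<xi> i)) \<longlonglongrightarrow> 0"
proof -
  assume i: "i < n"
  have "(\<lambda>k. q0 ^ k * nv (x 0 i - \<xi> i)) \<longlonglongrightarrow> 0 * nv (x 0 i - \<xi> i)"
    using q0 by (intro tendsto_mult LIMSEQ_power_zero tendsto_const) auto
  then have lim: "(\<lambda>k. q0 ^ k * nv (x 0 i - \<xi> i)) \<longlonglongrightarrow> 0" by simp
  show ?thesis
  proof (rule Lim_null_comparison[OF _ lim])
    show "\<forall>\<^sub>F k in sequentially. norm (nv (x k i - \<xi> i)) \<le> q0 ^ k * nv (x 0 i - \<xi> i)"
      using err_geom[OF i] nv_ge0[OF nv] by (intro always_eventually) auto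
  qed
qed

lemma xi_distinct: "i < n \<Longrightarrow> j < n \<Longrightarrow> i \<noteq> j \<Longrightarrow> \<xi> i \<noteq> \<xi> j"
proof
  assume ij: "i < n" "j < n" "i \<noteq> j" and eq: "\<xi> i = \<xi> j"
  let ?d = "nv (x 0 i - x 0 j)"
  have d0: "0 < ?d" using dist0 ij nv_eq0[OF nv] nv_ge0[OF nv] by (auto simp: dist_vec_def less_le)
  have "?d \<le> nv (x 0 i - \<xi> i) + nv (\<xi> i - x 0 j)" by (rule nv_tri[OF nv])
  also have "nv (\<xi> i - x 0 j) = nv (x 0 j - \<xi> j)" using eq nv_commute[OF nv] by simp
  finally have s: "?d \<le> nv (x 0 i - \<xi> i) + nv (x 0 j - \<xi> j)" .
  have "nv (x 0 i - \<xi> i) \<le> t0 * ?d" using e_le[OF dist0 ij(1,2)] ij(3) by simp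
  moreover have "nv (x 0 j - \<xi> j) \<le> t0 * ?d"
    using e_le[OF dist0 ij(2,1)] ij(3) nv_commute[OF nv, of "x 0 j" "x 0 i"] by simp
  ultimately have "?d \<le> 2 * t0 * ?d" using s by linarith
  then have "1 \<le> 2 * t0" using d0 by simp
  then show False using G_t_half[OF p1 n2 init] by simp
qed

end

context witer begin

abbreviation "err k i \<equiv> nv (x k i - \<xi> i)"
abbreviation "Mx k \<equiv> Max ((\<lambda>j. err k j) ` {..<n})"

lemma err_le_Mx: "i < n \<Longrightarrow> err k i \<le> Mx k"
  by (intro Max_ge) auto

lemma Mx_nonneg: "0 \<le> Mx k"
  using err_le_Mx[OF n0, of k] nv_ge0[OF nv, of "x k 0 - \<xi> 0"] by linarith

lemma step_Mx: "i < n \<Longrightarrow> err (Suc k) i \<le> phi n p (Efun nv n p \<xi> (x k)) ^ N * Mx k"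
proof -
  assume i: "i < n"
  have "err (Suc k) i \<le> phi n p (Efun nv n p \<xi> (x k)) ^ N * err k i"
    using one_step(2)[OF dist_k G_k N1 i] iter by simp
  also have "\<dots> \<le> phi n p (Efun nv n p \<xi> (x k)) ^ N * Mx k"
    using err_le_Mx[OF i] phi_nonneg[OF p1 n2 G_k] by (intro mult_left_mono) auto
  finally show ?thesis .
qed

lemma Mx_zero: assumes "Mx k = 0" "i < n" shows "err (Suc k) i = 0"
  using step_Mx[OF assms(2), of k] assms(1) nv_ge0[OF nv, of "x (Suc k) i - \<xi> i"] by simp

lemma early_bound:
  "\<exists>C2 \<ge> 0. \<forall>k<K. \<forall>i<n. err (Suc k) i \<le> C2 * Mx k ^ (N + 1)"
proof -
  define C2 where "C2 = (\<Sum>k<K. \<Sum>i<n. err (Suc k) i / Mx k ^ (N + 1))"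
  have terms: "0 \<le> err (Suc k) i / Mx k ^ (N + 1)" for k i
    using nv_ge0[OF nv] Mx_nonneg by simp
  have C20: "0 \<le> C2" unfolding C2_def using terms by (intro sum_nonneg) auto
  have "err (Suc k) i \<le> C2 * Mx k ^ (N + 1)" if k: "k < K" and i: "i < n" for k i
  proof (cases "Mx k = 0")
    case True then show ?thesis using Mx_zero[OF True i] by simp
  next
    case False
    then have "0 < Mx k" using Mx_nonneg[of k] by linarith
    then have Mp: "0 < Mx k ^ (N + 1)" by (rule zero_less_power)
    have "err (Suc k) i / Mx k ^ (N + 1) \<le> (\<Sum>i<n. err (Suc k) i / Mx k ^ (N + 1))"
      using i terms by (intro member_le_sum) auto
    also have "\<dots> \<le> C2" unfolding C2_def
      using k terms by (intro member_le_sum[of k "{..<K}" "\<lambda>k. \<Sum>i<n. err (Suc k) i / Mx k ^ (N + 1)"]) (auto intro: sum_nonneg)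
    finally show ?thesis using Mp by (simp add: divide_le_eq)
  qed
  then show ?thesis using C20 by blast
qed

end

context witer begin

lemma order_bound: "\<exists>C. \<forall>k. \<forall>i<n. err (Suc k) i \<le> C * Mx k ^ (N + 1)"
proof (cases "t0 = 0")
  case True
  have e0: "err 0 i = 0" if i: "i < n" for i
  proof -
    define j where "j = (if i = 0 then 1 else 0::nat)"
    have j: "j < n" "j \<noteq> i" using n2 i by (auto simp: j_def)
    have "err 0 i \<le> t0 * nv (x 0 i - x 0 j)" using e_le[OF dist0 i j] .
    then show ?thesis using True nv_ge0[OF nv, of "x 0 i - \<xi> i"] by simp
  qed
  have "err (Suc k) i = 0" if "i < n" for k i
    using err2[OF that, of "Suc k"] e0[OF that] nv_ge0[OF nv, of "x (Suc k) i - \<xi> i"] by simp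
  then show ?thesis by (intro exI[of _ 0]) simp
next
  case False
  then have t0p: "0 < t0" using t00 by simp
  define P where "P = {(i, j). i < n \<and> j < n \<and> i \<noteq> j}"
  have fP: "finite P" unfolding P_def by (rule finite_subset[of _ "{..<n} \<times> {..<n}"]) auto
  have P01: "(0, 1) \<in> P" using n2 by (simp add: P_def)
  define \<delta> where "\<delta> = Min ((\<lambda>(i, j). nv (\<xi> i - \<xi> j)) ` P)"
  have \<delta>0: "0 < \<delta>" unfolding \<delta>_def
  proof (subst Min_gr_iff)
    show "finite ((\<lambda>(i, j). nv (\<xi> i - \<xi> j)) ` P)" using fP by simp
    show "(\<lambda>(i, j). nv (\<xi> i - \<xi> j)) ` P \<noteq> {}" using P01 by blast
    show "\<forall>a\<in>(\<lambda>(i, j). nv (\<xi> i - \<xi> j)) ` P. 0 < a"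
    proof
      fix a assume "a \<in> (\<lambda>(i, j). nv (\<xi> i - \<xi> j)) ` P"
      then obtain i j where ij: "i < n" "j < n" "i \<noteq> j" and a: "a = nv (\<xi> i - \<xi> j)"
        by (auto simp: P_def)
      have "\<xi> i - \<xi> j \<noteq> 0" using xi_distinct[OF ij] by simp
      then show "0 < a" using a nv_eq0[OF nv] nv_ge0[OF nv] by (simp add: less_le)
    qed
  qed
  have \<delta>le: "\<delta> \<le> nv (\<xi> i - \<xi> j)" if "i < n" "j < n" "i \<noteq> j" for i j
  proof -
    have "(i, j) \<in> P" using that by (simp add: P_def)
    then show ?thesis unfolding \<delta>_def using fP by (intro Min_le) force+
  qed
  have ev: "\<forall>\<^sub>F k in sequentially. \<forall>i\<in>{..<n}. err k i < \<delta> / 4"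
  proof (rule eventually_ball_finite)
    show "finite {..<n}" by simp
    show "\<forall>i\<in>{..<n}. \<forall>\<^sub>F k in sequentially. err k i < \<delta> / 4"
    proof
      fix i assume "i \<in> {..<n}"
      then have "i < n" by simp
      moreover have "(0::real) < \<delta> / 4" using \<delta>0 by simp
      ultimately show "\<forall>\<^sub>F k in sequentially. err k i < \<delta> / 4"
        using conv order_tendstoD(2) by blast
    qed
  qed
  then obtain K where K: "\<And>k i. k \<ge> K \<Longrightarrow> i < n \<Longrightarrow> err k i < \<delta> / 4"
    unfolding eventually_sequentially by blast
  define K0 where "K0 = pnorm n p (\<lambda>_. 1)"
  have K00: "0 \<le> K0" unfolding K0_def by (rule pnorm_nonneg[OF p1 n0])
  define c1 where "c1 = 2 * K0 * lam / (\<delta> * t0)"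
  have c10: "0 \<le> c1" unfolding c1_def using K00 lam0 \<delta>0 t0p by simp
  have late: "err (Suc k) i \<le> c1 ^ N * Mx k ^ (N + 1)" if k: "k \<ge> K" and i: "i < n" for k i
  proof -
    have dv: "\<delta> / 2 \<le> dvec nv n (x k) j" if j: "j < n" for j
    proof -
      have "\<delta> / 2 \<le> Min ((\<lambda>l. nv (x k j - x k l)) ` ({..<n} - {j}))"
      proof (rule Min.boundedI)
        show "finite ((\<lambda>l. nv (x k j - x k l)) ` ({..<n} - {j}))" by simp
        show "(\<lambda>l. nv (x k j - x k l)) ` ({..<n} - {j}) \<noteq> {}" using Sne[OF j] by simp
      next
        fix a assume "a \<in> (\<lambda>l. nv (x k j - x k l)) ` ({..<n} - {j})"
        then obtain l where l: "l < n" "l \<noteq> j" and a: "a = nv (x k j - x k l)" by auto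
        have "nv (\<xi> j - \<xi> l) \<le> nv (\<xi> j - x k j) + nv (x k j - \<xi> l)" by (rule nv_tri[OF nv])
        also have "nv (x k j - \<xi> l) \<le> nv (x k j - x k l) + nv (x k l - \<xi> l)" by (rule nv_tri[OF nv])
        finally have "nv (\<xi> j - \<xi> l) \<le> err k j + a + err k l"
          using a nv_commute[OF nv, of "\<xi> j" "x k j"] by simp
        moreover have "\<delta> \<le> nv (\<xi> j - \<xi> l)" using \<delta>le[OF j l(1) l(2)[symmetric]] .
        moreover have "err k j < \<delta> / 4" "err k l < \<delta> / 4" using K[OF k] j l by auto
        ultimately show "\<delta> / 2 \<le> a" by linarith
      qed
      then show ?thesis by (simp add: dvec_def)
    qed
    have tdle: "\<bar>td (x k) j\<bar> \<le> (2 * Mx k / \<delta>) * \<bar>1\<bar>" if j: "j < n" for j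
    proof -
      have "td (x k) j = err k j / dvec nv n (x k) j" by (simp add: td_def)
      also have "\<dots> \<le> err k j / (\<delta> / 2)"
        using dv[OF j] \<delta>0 nv_ge0[OF nv] by (intro divide_left_mono) auto
      also have "\<dots> \<le> Mx k / (\<delta> / 2)" using err_le_Mx[OF j] \<delta>0 by (intro divide_right_mono) auto
      finally show ?thesis using td_nonneg[of "x k" j] by (simp add: field_simps)
    qed
    have tk: "Efun nv n p \<xi> (x k) \<le> (2 * Mx k / \<delta>) * K0"
      unfolding Efun_td K0_def
      by (rule pnorm_le_scale[OF p1 n0]) (use Mx_nonneg \<delta>0 tdle in auto)
    define \<theta> where "\<theta> = Efun nv n p \<xi> (x k) / t0"
    have th0: "0 \<le> \<theta>" unfolding \<theta>_def using Efun_nonneg t0p by simp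
    have th1: "\<theta> \<le> 1" unfolding \<theta>_def using t_k t0p by simp
    have "phi n p (Efun nv n p \<xi> (x k)) \<le> \<theta> * lam"
      using phi_le_scaled[OF p1 n2 init th0 th1 Efun_nonneg] t0p by (simp add: \<theta>_def)
    also have "\<dots> \<le> ((2 * Mx k / \<delta>) * K0 / t0) * lam"
      unfolding \<theta>_def using tk t0p lam0 by (intro mult_right_mono divide_right_mono) auto
    also have "\<dots> = c1 * Mx k" unfolding c1_def by (simp add: field_simps)
    finally have phk: "phi n p (Efun nv n p \<xi> (x k)) \<le> c1 * Mx k" .
    have "err (Suc k) i \<le> phi n p (Efun nv n p \<xi> (x k)) ^ N * Mx k" using step_Mx[OF i] .
    also have "\<dots> \<le> (c1 * Mx k) ^ N * Mx k"
      using phk phi_nonneg[OF p1 n2 G_k] Mx_nonneg by (intro mult_right_mono power_mono) auto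
    also have "\<dots> = c1 ^ N * Mx k ^ (N + 1)" by (simp add: power_mult_distrib)
    finally show ?thesis .
  qed
  obtain C2 where C20: "0 \<le> C2" and C2: "\<And>k i. k < K \<Longrightarrow> i < n \<Longrightarrow> err (Suc k) i \<le> C2 * Mx k ^ (N + 1)"
    using early_bound[of K] by blast
  have "err (Suc k) i \<le> (c1 ^ N + C2) * Mx k ^ (N + 1)" if i: "i < n" for k i
  proof -
    have M0: "0 \<le> Mx k ^ (N + 1)" using Mx_nonneg by simp
    have cN: "0 \<le> c1 ^ N" using c10 by simp
    show ?thesis
    proof (cases "k < K")
      case True
      have "C2 * Mx k ^ (N + 1) \<le> (c1 ^ N + C2) * Mx k ^ (N + 1)"
        using M0 cN by (intro mult_right_mono) auto
      then show ?thesis using C2[OF True i] by linarith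
    next
      case False
      then have kK: "K \<le> k" by simp
      have "c1 ^ N * Mx k ^ (N + 1) \<le> (c1 ^ N + C2) * Mx k ^ (N + 1)"
        using M0 C20 by (intro mult_right_mono) auto
      then show ?thesis using late[OF kK i] by linarith
    qed
  qed
  then show ?thesis by blast
qed

end

lemma alg_closed_infinite: "infinite (UNIV :: 'a::alg_closed_field set)"
proof
  assume fin: "finite (UNIV::'a set)"
  define P where "P = (\<Prod>a\<in>(UNIV::'a set). [:-a, 1:])"
  have dP: "degree P = card (UNIV::'a set)"
    unfolding P_def by (subst degree_prod_eq_sum_degree) auto
  have c1: "card (UNIV::'a set) \<ge> 1" using fin by (simp add: card_gt_0_iff Suc_le_eq)
  have dq: "degree (P + 1) = degree P"
    using dP c1 by (intro degree_add_eq_left) simp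
  then have "degree (P + 1) > 0" using dP c1 by simp
  then obtain z where z: "poly (P + 1) z = 0" using alg_closed_imp_poly_has_root by blast
  have "poly P z = (\<Prod>a\<in>(UNIV::'a set). z - a)" unfolding P_def by (simp add: poly_prod)
  also have "\<dots> = 0" using fin by (intro prod_zero) auto
  finally show False using z by simp
qed

lemma order_linear: "order a [:-b, 1:] = (if a = b then 1 else 0)"
proof (cases "a = b")
  case True
  then show ?thesis using order_power_n_n[of a 1] by simp
next
  case False
  then have "poly [:-b, 1:] a \<noteq> 0" by simp
  then have "order a [:-b, 1:] = 0" by (rule order_0I)
  then show ?thesis using False by simp
qed

lemma order_prod_linear:
  fixes \<xi> :: "nat \<Rightarrow> 'a::idom"
  shows "order a (\<Prod>i<m. [:-\<xi> i, 1:]) = card {i. i < m \<and> \<xi> i = a}"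
proof (induction m)
  case 0 then show ?case by simp
next
  case (Suc m)
  have p1: "(\<Prod>i<m. [:-\<xi> i, 1:]) \<noteq> 0" by (subst prod_zero_iff) auto
  have p2: "[:-\<xi> m, 1:] \<noteq> (0::'a poly)" by simp
  have nz: "(\<Prod>i<m. [:-\<xi> i, 1:]) * [:-\<xi> m, 1:] \<noteq> 0" using p1 p2 mult_eq_0_iff by blast
  have "order a (\<Prod>i<Suc m. [:-\<xi> i, 1:]) = order a ((\<Prod>i<m. [:-\<xi> i, 1:]) * [:-\<xi> m, 1:])"
    by simp
  also have "\<dots> = card {i. i < m \<and> \<xi> i = a} + (if a = \<xi> m then 1 else 0)"
    unfolding order_mult[OF nz] Suc.IH order_linear by simp
  also have "\<dots> = card {i. i < Suc m \<and> \<xi> i = a}"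
  proof (cases "\<xi> m = a")
    case True
    have "{i. i < Suc m \<and> \<xi> i = a} = insert m {i. i < m \<and> \<xi> i = a}" using True by auto
    then show ?thesis using True by simp
  next
    case False
    have "{i. i < Suc m \<and> \<xi> i = a} = {i. i < m \<and> \<xi> i = a}" using False less_Suc_eq by auto
    then show ?thesis using False by auto
  qed
  finally show ?case .
qed

lemma rsquarefree_from_roots:
  fixes f :: "'a::alg_closed_field poly"
  assumes deg: "degree f = n" and n1: "1 \<le> n"
    and root: "root_vector f n \<xi>"
    and dist: "\<And>i j. i < n \<Longrightarrow> j < n \<Longrightarrow> i \<noteq> j \<Longrightarrow> \<xi> i \<noteq> \<xi> j"
  shows "rsquarefree f"
proof -
  define Q where "Q = (\<Prod>i<n. [:-\<xi> i, 1:])"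
  have f0: "f \<noteq> 0" using deg n1 by auto
  have lc: "lead_coeff f \<noteq> 0" using f0 by simp
  obtain A :: "'a set" where A: "finite A" "card A = Suc n"
    using infinite_arbitrarily_large[OF alg_closed_infinite] by blast
  have dQ: "degree Q \<le> n"
  proof -
    have "degree Q \<le> (\<Sum>i<n. degree [:-\<xi> i, 1:])" unfolding Q_def
      using degree_prod_sum_le[of "{..<n}" "\<lambda>i. [:-\<xi> i, 1:]"] by (simp add: o_def)
    then show ?thesis by simp
  qed
  have feq: "f = smult (lead_coeff f) Q"
  proof (rule poly_eqI_degree[of A])
    fix z assume "z \<in> A"
    show "poly f z = poly (smult (lead_coeff f) Q) z"
      using root by (simp add: root_vector_def Q_def poly_prod)
  next
    show "degree f < card A" using deg A by simp
    show "degree (smult (lead_coeff f) Q) < card A"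
      using dQ A degree_smult_le[of "lead_coeff f" Q] by linarith
  qed
  have "order a f = 0 \<or> order a f = 1" for a
  proof -
    have "order a f = order a Q" using feq lc by (metis order_smult)
    also have "\<dots> = card {i. i < n \<and> \<xi> i = a}" unfolding Q_def by (rule order_prod_linear)
    also have "\<dots> \<le> 1"
    proof -
      have "finite {i. i < n \<and> \<xi> i = a}" by simp
      moreover have "\<forall>i\<in>{i. i < n \<and> \<xi> i = a}. \<forall>j\<in>{i. i < n \<and> \<xi> i = a}. i = j"
        using dist by blast
      ultimately show ?thesis using card_le_Suc0_iff_eq by (metis One_nat_def)
    qed
    finally show ?thesis by linarith
  qed
  then show ?thesis using f0 by (simp add: rsquarefree_def)
qed



theorem corollary2p12:
  fixes nv :: "'a::alg_closed_field \<Rightarrow> real"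
    and f :: "'a poly" and n N :: nat and p :: ereal
    and \<xi> :: "nat \<Rightarrow> 'a" and x :: "nat \<Rightarrow> nat \<Rightarrow> 'a"
  assumes nv: "abs_value nv"
    and deg: "degree f = n" and n2: "n \<ge> 2"
    and root: "root_vector f n \<xi>"
    and N1: "N \<ge> 1" and p1: "1 \<le> p"
    and dist0: "\<forall>i<n. \<forall>j<n. i \<noteq> j \<longrightarrow> x 0 i \<noteq> x 0 j"
    and init: "Psi n p (Efun nv n p \<xi> (x 0)) \<le> 2"
    and iter: "\<forall>k. x (Suc k) = WT f n N (x k)"
  shows "rsquarefree f
    \<and> (\<forall>k. x k \<in> WD f n N)
    \<and> (\<forall>i<n. ((\<lambda>k. nv (x k i - \<xi> i)) \<longlonglongrightarrow> 0))
    \<and> (\<forall>k. \<forall>i<n. nv (x (Suc k) i - \<xi> i)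
          \<le> phi n p (Efun nv n p \<xi> (x 0)) ^ (N * (N + 1) ^ k) * nv (x k i - \<xi> i))
    \<and> (\<forall>k. \<forall>i<n. nv (x k i - \<xi> i)
          \<le> phi n p (Efun nv n p \<xi> (x 0)) ^ ((N + 1) ^ k - 1) * nv (x 0 i - \<xi> i))
    \<and> (Psi n p (Efun nv n p \<xi> (x 0)) < 2 \<longrightarrow>
        (\<exists>C. \<forall>k. \<forall>i<n. nv (x (Suc k) i - \<xi> i)
              \<le> C * (Max ((\<lambda>j. nv (x k j - \<xi> j)) ` {..<n})) ^ (N + 1)))"
proof -
  interpret wsetting nv f n \<xi> p
    using nv deg n2 root p1 by unfold_locales auto
  have d0: "dist_vec n (x 0)" using dist0 by (simp add: dist_vec_def)
  have G0: "G n p (Efun nv n p \<xi> (x 0))" using init Efun_nonneg by (simp add: G_def)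
  interpret witer nv f n \<xi> p x N
    using N1 d0 G0 iter by unfold_locales auto
  have r: "rsquarefree f"
    using rsquarefree_from_roots[OF deg _ root xi_distinct] n2 by simp
  show ?thesis
    using r wd_k conv err1 err2 order_bound by blast
qed

end
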